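(* Let $G$ be a Lie group, $H\subseteq G$ a closed subgroup, and $\mathfrak{g}=\mathfrak{h}\oplus\mathfrak{m}$ a reductive decomposition. Equip $G/H$ with a $G$-invariant Riemannian metric (an $\mathrm{Ad}(H)$-invariant inner product $\langle\cdot,\cdot\rangle$ on $\mathfrak{m}$). Suppose $A$ is a $G$-invariant Codazzi tensor field on $G/H$, with $\langle\cdot,\cdot\rangle$-orthogonal eigenspace decomposition $\mathfrak{m}=\mathfrak{m}_1\oplus\cdots\oplus\mathfrak{m}_r$ on $\mathfrak{m}$, where $\mathfrak{m}_i$ corresponds to the eigenvalue $\lambda_i$ and $\lambda_1<\cdots<\lambda_r$. Then: (i) for $j\in\{1,r\}$ and every $Y\in\mathfrak{m}$, $\mathrm{Ric}^d(Y_j,Y_j)\le\mathrm{Ric}^d_j(Y_j,Y_j)$, where $Y_j$ is the $\mathfrak{m}_j$-component of $Y$; (ii) $\mathrm{s}^d_1+\cdots+\mathrm{s}^d_r=\mathrm{s}^d$.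
   Context: A reductive decomposition means $\mathfrak{m}$ is an $\mathrm{Ad}(H)$-invariant vector space complement of $\mathfrak{h}$ in $\mathfrak{g}$; $[X,Y]_{\mathfrak{m}}$ is the $\mathfrak{m}$-component of $[X,Y]$ in $\mathfrak{g}=\mathfrak{h}\oplus\mathfrak{m}$, and $\mathfrak{m}\cong T_{eH}(G/H)$. $G$-invariant tensor fields correspond to $\mathrm{Ad}(H)$-invariant tensors on $\mathfrak{m}$. A Codazzi tensor field is a symmetric twice-covariant tensor field $A$ with $(\nabla_XA)(Y,Z)=(\nabla_YA)(X,Z)$ for all vector fields, $\nabla$ the Levi-Civita connection. The Levi-Civita product $\alpha:\mathfrak{m}\times\mathfrak{m}\to\mathfrak{m}$ is defined by $2\langle\alpha(X,Y),Z\rangle=\langle[X,Y]_{\mathfrak{m}},Z\rangle-\langle X,[Y,Z]_{\mathfrak{m}}\rangle-\langle[X,Z]_{\mathfrak{m}},Y\rangle$. The difference curvature tensor is $R^d=R-R^0$, where $R$ is the Riemann curvature at $eH$ and $R^0(X,Y)Z=-[[X,Y]_{\mathfrak{h}},Z]$ is the curvature of the canonical connection of the second kind; explicitly $R^d(X,Y)Z=\alpha(X,\alpha(Y,Z))-\alpha(Y,\alpha(X,Z))-\alpha([X,Y]_{\mathfrak{m}},Z)$ for $X,Y,Z\in\mathfrak{m}$. The difference Ricci tensor is $\mathrm{Ric}^d(Y,Z)=\mathrm{tr}(X\mapsto R^d(X,Y)Z)$ (trace over $\mathfrak{m}$), and $\mathrm{s}^d$ is its trace with respect to $\langle\cdot,\cdot\rangle$.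 Each eigenspace $\mathfrak{m}_i$ is closed under $[\cdot,\cdot]_{\mathfrak{m}}$ and $\alpha$, so for $Y_i,Z_i\in\mathfrak{m}_i$ the endomorphism $X\mapsto R^d(X,Y_i)Z_i$ of $\mathfrak{m}$ restricts to an endomorphism of $\mathfrak{m}_i$; $\mathrm{Ric}^d_i(Y_i,Z_i)$ is the trace of this restriction, and $\mathrm{s}^d_i$ is the trace of $\mathrm{Ric}^d_i$ with respect to $\langle\cdot,\cdot\rangle|_{\mathfrak{m}_i\times\mathfrak{m}_i}$. *)

theory Defs
  imports "HOL-Analysis.Analysis"
begin

text \<open>Algebraic data at the origin eH of a reductive homogeneous space G/H.
  The Lie algebra g is modelled by a finite-dimensional real vector space 'g
  (its own inner product is never used), with a Lie bracket brk, the subalgebra h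
  and the complement m given as subspaces.\<close>

definition lie_bracket :: "('g::euclidean_space \<Rightarrow> 'g \<Rightarrow> 'g) \<Rightarrow> bool" where
  "lie_bracket brk \<longleftrightarrow> bilinear brk \<and> (\<forall>x y. brk x y = - brk y x) \<and>
     (\<forall>x y z. brk x (brk y z) + brk y (brk z x) + brk z (brk x y) = 0)"

definition reductive_decomp :: "('g::euclidean_space \<Rightarrow> 'g \<Rightarrow> 'g) \<Rightarrow> 'g set \<Rightarrow> 'g set \<Rightarrow> bool" where
  "reductive_decomp brk h m \<longleftrightarrow> lie_bracket brk \<and> subspace h \<and> subspace m \<and>
     h \<inter> m = {0} \<and> (\<forall>x. \<exists>a\<in>h. \<exists>X\<in>m. x = a + X) \<and>
     (\<forall>a\<in>h. \<forall>b\<in>h. brk a b \<in> h) \<and> (\<forall>a\<in>h. \<forall>X\<in>m. brk a X \<in> m)"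

definition prm :: "'g::euclidean_space set \<Rightarrow> 'g set \<Rightarrow> 'g \<Rightarrow> 'g" where
  "prm h m x = (THE X. X \<in> m \<and> x - X \<in> h)"

text \<open>Symmetric bilinear form on m, invariant under ad(h) (infinitesimal Ad(H)-invariance).\<close>
definition inv_sym_form :: "('g::euclidean_space \<Rightarrow> 'g \<Rightarrow> 'g) \<Rightarrow> 'g set \<Rightarrow> 'g set \<Rightarrow> ('g \<Rightarrow> 'g \<Rightarrow> real) \<Rightarrow> bool" where
  "inv_sym_form brk h m B \<longleftrightarrow> bilinear B \<and> (\<forall>X Y. B X Y = B Y X) \<and>
     (\<forall>a\<in>h. \<forall>X\<in>m. \<forall>Y\<in>m. B (brk a X) Y + B X (brk a Y) = 0)"

definition inv_inner :: "('g::euclidean_space \<Rightarrow> 'g \<Rightarrow> 'g) \<Rightarrow> 'g set \<Rightarrow> 'g set \<Rightarrow> ('g \<Rightarrow> 'g \<Rightarrow> real) \<Rightarrow> bool" where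
  "inv_inner brk h m ip \<longleftrightarrow> inv_sym_form brk h m ip \<and> (\<forall>X\<in>m. X \<noteq> 0 \<longrightarrow> ip X X > 0)"

definition lc_alpha :: "('g::euclidean_space \<Rightarrow> 'g \<Rightarrow> 'g) \<Rightarrow> 'g set \<Rightarrow> 'g set \<Rightarrow> ('g \<Rightarrow> 'g \<Rightarrow> real) \<Rightarrow> 'g \<Rightarrow> 'g \<Rightarrow> 'g" where
  "lc_alpha brk h m ip X Y = (THE W. W \<in> m \<and> (\<forall>Z\<in>m.
     2 * ip W Z = ip (prm h m (brk X Y)) Z - ip X (prm h m (brk Y Z)) - ip (prm h m (brk X Z)) Y))"

text \<open>Codazzi condition for the G-invariant tensor A at eH, using the Nomizu formula
  (nabla_X A)(Y,Z) = - A(alpha(X,Y),Z) - A(Y,alpha(X,Z)) for the Levi-Civita connection.\<close>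
definition codazzi :: "('g::euclidean_space \<Rightarrow> 'g \<Rightarrow> 'g) \<Rightarrow> 'g set \<Rightarrow> 'g set \<Rightarrow> ('g \<Rightarrow> 'g \<Rightarrow> real) \<Rightarrow> ('g \<Rightarrow> 'g \<Rightarrow> real) \<Rightarrow> bool" where
  "codazzi brk h m ip A \<longleftrightarrow> (\<forall>X\<in>m. \<forall>Y\<in>m. \<forall>Z\<in>m.
     - A (lc_alpha brk h m ip X Y) Z - A Y (lc_alpha brk h m ip X Z)
     = - A (lc_alpha brk h m ip Y X) Z - A X (lc_alpha brk h m ip Y Z))"

definition eigsp :: "'g::euclidean_space set \<Rightarrow> ('g \<Rightarrow> 'g \<Rightarrow> real) \<Rightarrow> ('g \<Rightarrow> 'g \<Rightarrow> real) \<Rightarrow> real \<Rightarrow> 'g set" where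
  "eigsp m ip A lam = {X \<in> m. \<forall>Y\<in>m. A X Y = lam * ip X Y}"

definition Rd :: "('g::euclidean_space \<Rightarrow> 'g \<Rightarrow> 'g) \<Rightarrow> 'g set \<Rightarrow> 'g set \<Rightarrow> ('g \<Rightarrow> 'g \<Rightarrow> real) \<Rightarrow> 'g \<Rightarrow> 'g \<Rightarrow> 'g \<Rightarrow> 'g" where
  "Rd brk h m ip X Y Z = (let al = lc_alpha brk h m ip in
     al X (al Y Z) - al Y (al X Z) - al (prm h m (brk X Y)) Z)"

definition lin_trace :: "'g::euclidean_space set \<Rightarrow> ('g \<Rightarrow> 'g) \<Rightarrow> real" where
  "lin_trace V f = (let B = (SOME B. independent B \<and> span B = V) in
     \<Sum>b\<in>B. real_vector.representation B (f b) b)"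

definition form_trace :: "('g::euclidean_space \<Rightarrow> 'g \<Rightarrow> real) \<Rightarrow> 'g set \<Rightarrow> ('g \<Rightarrow> 'g \<Rightarrow> real) \<Rightarrow> real" where
  "form_trace ip V F = (let Ob = (SOME Ob. finite Ob \<and> Ob \<subseteq> V \<and> span Ob = V \<and>
        (\<forall>e\<in>Ob. \<forall>e'\<in>Ob. ip e e' = (if e = e' then 1 else 0))) in
     \<Sum>e\<in>Ob. F e e)"

text \<open>Difference Ricci tensor: trace over V (V = m gives Ric^d, V = m_i gives Ric^d_i).\<close>
definition Ricd :: "('g::euclidean_space \<Rightarrow> 'g \<Rightarrow> 'g) \<Rightarrow> 'g set \<Rightarrow> 'g set \<Rightarrow> ('g \<Rightarrow> 'g \<Rightarrow> real) \<Rightarrow> 'g set \<Rightarrow> 'g \<Rightarrow> 'g \<Rightarrow> real" where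
  "Ricd brk h m ip V Y Z = lin_trace V (\<lambda>X. Rd brk h m ip X Y Z)"

text \<open>Difference scalar curvature s^d (V = m) and s^d_i (V = m_i).\<close>
definition sd :: "('g::euclidean_space \<Rightarrow> 'g \<Rightarrow> 'g) \<Rightarrow> 'g set \<Rightarrow> 'g set \<Rightarrow> ('g \<Rightarrow> 'g \<Rightarrow> real) \<Rightarrow> 'g set \<Rightarrow> real" where
  "sd brk h m ip V = form_trace ip V (Ricd brk h m ip V)"

definition dcomp :: "(nat \<Rightarrow> 'g::euclidean_space set) \<Rightarrow> nat \<Rightarrow> nat \<Rightarrow> 'g \<Rightarrow> 'g" where
  "dcomp M r j Y = (THE Z. \<exists>f. (\<forall>i\<in>{1..r}. f i \<in> M i) \<and> Y = (\<Sum>i=1..r. f i) \<and> Z = f j)"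

end

theory Submission
  imports Defs
begin


lemma quad_zero:
  fixes a c :: real
  assumes "c \<ge> 0" and "\<And>t. 0 \<le> 2 * t * a + t * t * c"
  shows "a = 0"
proof -
  have d: "c + 1 > 0" using assms(1) by simp
  have "0 \<le> 2 * (-a/(c+1)) * a + (-a/(c+1)) * (-a/(c+1)) * c" by (rule assms(2))
  also have "\<dots> = - (a ^ 2 * (c+2)) / (c+1)^2"
  proof -
    have e1: "2 * (-a/(c+1)) * a = (-2*a^2*(c+1))/(c+1)^2" using d by (simp add: power2_eq_square)
    have e2: "(-a/(c+1)) * (-a/(c+1)) * c = (a^2*c)/(c+1)^2" by (simp add: power2_eq_square)
    have e3: "(-2*a^2*(c+1))/(c+1)^2 + (a^2*c)/(c+1)^2 = (-2*a^2*(c+1) + a^2*c)/(c+1)^2"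
      by (rule add_divide_distrib[symmetric])
    have e4: "-2*a^2*(c+1) + a^2*c = - (a ^ 2 * (c+2))" by (simp add: algebra_simps)
    show ?thesis using e1 e2 e3 e4 by simp
  qed
  finally have "a ^ 2 * (c+2) \<le> 0" using d
    by (simp add: divide_le_0_iff)
  moreover have "c + 2 > 0" using assms(1) by simp
  ultimately have "a ^ 2 \<le> 0" by (simp add: mult_le_0_iff)
  thus ?thesis by simp
qed

lemma exists_eigvec:
  fixes B ip :: "'g::euclidean_space \<Rightarrow> 'g \<Rightarrow> real"
  assumes V: "subspace V" and nz: "V \<noteq> {0}" and bB: "bilinear B" and bip: "bilinear ip"
    and pos: "\<And>X. X \<in> V \<Longrightarrow> X \<noteq> 0 \<Longrightarrow> ip X X > 0"
    and symB: "\<And>X Y. B X Y = B Y X" and symip: "\<And>X Y. ip X Y = ip Y X"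
  shows "\<exists>X0\<in>V. X0 \<noteq> 0 \<and> (\<exists>l. \<forall>Z\<in>V. B X0 Z = l * ip X0 Z)"
proof -
  define S where "S = V \<inter> sphere 0 1"
  have "compact (sphere (0::'g) 1 \<inter> V)"
    by (rule compact_Int_closed) (simp_all add: V closed_subspace)
  hence "compact S" unfolding S_def by (simp add: Int_commute)
  obtain X where X: "X \<in> V" "X \<noteq> 0" using nz V subspace_0 by blast
  have "X /\<^sub>R norm X \<in> S" using X V unfolding S_def by (simp add: subspace_scale)
  hence Sne: "S \<noteq> {}" by blast
  define rho where "rho X = B X X / ip X X" for X
  have cB: "continuous_on S (\<lambda>X. B X X)"
    by (rule bilinear_continuous_on_compose[OF continuous_on_id continuous_on_id bB])
  have cI: "continuous_on S (\<lambda>X. ip X X)"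
    by (rule bilinear_continuous_on_compose[OF continuous_on_id continuous_on_id bip])
  have Spos: "\<And>X. X \<in> S \<Longrightarrow> ip X X > 0" using pos unfolding S_def by (metis IntE mem_sphere_0 norm_zero zero_neq_one)
  have "continuous_on S rho" unfolding rho_def
    using Spos by (intro continuous_on_divide cB cI) (metis less_irrefl)
  then obtain X0 where X0: "X0 \<in> S" "\<And>Y. Y \<in> S \<Longrightarrow> rho Y \<le> rho X0"
    using continuous_attains_sup[OF \<open>compact S\<close> Sne \<open>continuous_on S rho\<close>] by blast
  define l where "l = rho X0"
  have X0V: "X0 \<in> V" and X0nz: "X0 \<noteq> 0" using X0(1) unfolding S_def by auto
  have le: "B Y Y \<le> l * ip Y Y" if Y: "Y \<in> V" for Y
  proof (cases "Y = 0")
    case True thus ?thesis using bilinear_lzero[OF bB] bilinear_lzero[OF bip] by simp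
  next
    case False
    define Y' where "Y' = Y /\<^sub>R norm Y"
    have "Y' \<in> S" using Y False V unfolding S_def Y'_def by (simp add: subspace_scale)
    hence "rho Y' \<le> l" using X0 l_def by simp
    moreover have "rho Y' = rho Y" unfolding rho_def Y'_def
      using False by (simp add: bilinear_lmul[OF bB] bilinear_rmul[OF bB]
          bilinear_lmul[OF bip] bilinear_rmul[OF bip])
    ultimately have "B Y Y / ip Y Y \<le> l" unfolding rho_def by simp
    thus ?thesis using pos[OF Y False] by (simp add: divide_le_eq)
  qed
  have eq0: "B X0 X0 = l * ip X0 X0"
    using pos[OF X0V X0nz] unfolding l_def rho_def by simp
  have "\<forall>Z\<in>V. B X0 Z = l * ip X0 Z"
  proof
    fix Z assume Z: "Z \<in> V"
    define a where "a = l * ip X0 Z - B X0 Z"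
    define c where "c = l * ip Z Z - B Z Z"
    have c0: "c \<ge> 0" using le[OF Z] unfolding c_def by simp
    have "0 \<le> 2 * t * a + t * t * c" for t
    proof -
      have "X0 + t *\<^sub>R Z \<in> V" using X0V Z V by (simp add: subspace_add subspace_scale)
      hence "0 \<le> l * ip (X0 + t *\<^sub>R Z) (X0 + t *\<^sub>R Z) - B (X0 + t *\<^sub>R Z) (X0 + t *\<^sub>R Z)"
        using le by simp
      also have "\<dots> = 2 * t * a + t * t * c + (l * ip X0 X0 - B X0 X0)"
        unfolding a_def c_def
        by (simp add: bilinear_ladd[OF bB] bilinear_radd[OF bB] bilinear_lmul[OF bB] bilinear_rmul[OF bB]
          bilinear_ladd[OF bip] bilinear_radd[OF bip] bilinear_lmul[OF bip] bilinear_rmul[OF bip]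
          symB[of Z X0] symip[of Z X0] algebra_simps)
      finally show ?thesis using eq0 by simp
    qed
    hence "a = 0" using quad_zero[OF c0] by blast
    thus "B X0 Z = l * ip X0 Z" unfolding a_def by simp
  qed
  thus ?thesis using X0V X0nz by blast
qed


lemma bil_suml: "bilinear f \<Longrightarrow> f (\<Sum>i\<in>I. g i) z = (\<Sum>i\<in>I. f (g i) z)"
proof -
  assume "bilinear f"
  hence "linear (\<lambda>x. f x z)" by (simp add: bilinear_def)
  from linear_sum[OF this] show ?thesis by simp
qed

lemma bil_sumr: "bilinear f \<Longrightarrow> f z (\<Sum>i\<in>I. g i) = (\<Sum>i\<in>I. f z (g i))"
proof -
  assume "bilinear f"
  hence "linear (\<lambda>x. f z x)" by (simp add: bilinear_def)
  from linear_sum[OF this] show ?thesis by simp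
qed

definition onb :: "('g::euclidean_space \<Rightarrow> 'g \<Rightarrow> real) \<Rightarrow> 'g set \<Rightarrow> 'g set \<Rightarrow> bool" where
  "onb ip V Ob \<longleftrightarrow> finite Ob \<and> Ob \<subseteq> V \<and> span Ob = V \<and>
     (\<forall>e\<in>Ob. \<forall>e'\<in>Ob. ip e e' = (if e = e' then 1 else 0))"

lemma onb_expand:
  assumes Ob: "onb ip V Ob" and bip: "bilinear ip" and v: "v \<in> V"
  shows "v = (\<Sum>e\<in>Ob. ip v e *\<^sub>R e)"
proof -
  have fin: "finite Ob" and sp: "span Ob = V" and on: "\<And>e e'. e \<in> Ob \<Longrightarrow> e' \<in> Ob \<Longrightarrow> ip e e' = (if e = e' then 1 else 0)"
    using Ob unfolding onb_def by auto
  obtain u where u: "v = (\<Sum>e\<in>Ob. u e *\<^sub>R e)" using v sp span_finite[OF fin] by auto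
  have "ip v e' = u e'" if e': "e' \<in> Ob" for e'
  proof -
    have "ip v e' = (\<Sum>e\<in>Ob. u e * ip e e')"
      unfolding u bil_suml[OF bip] by (simp add: bilinear_lmul[OF bip])
    also have "\<dots> = (\<Sum>e\<in>Ob. if e = e' then u e else 0)"
      by (rule sum.cong) (auto simp: on e')
    also have "\<dots> = u e'" using fin e' by simp
    finally show ?thesis .
  qed
  hence "(\<Sum>e\<in>Ob. ip v e *\<^sub>R e) = (\<Sum>e\<in>Ob. u e *\<^sub>R e)" by simp
  thus ?thesis using u by simp
qed

lemma onb_lin:
  fixes L :: "'g::euclidean_space \<Rightarrow> real"
  assumes Ob: "onb ip V Ob" and bip: "bilinear ip" and L: "linear L" and v: "v \<in> V"
  shows "L v = (\<Sum>e\<in>Ob. ip v e * L e)"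
proof -
  have "L v = L (\<Sum>e\<in>Ob. ip v e *\<^sub>R e)" using onb_expand[OF Ob bip v] by simp
  also have "\<dots> = (\<Sum>e\<in>Ob. ip v e * L e)" by (simp add: linear_sum[OF L] linear_scale[OF L])
  finally show ?thesis .
qed

lemma spectral:
  fixes B ip :: "'g::euclidean_space \<Rightarrow> 'g \<Rightarrow> real"
  assumes bB: "bilinear B" and bip: "bilinear ip"
    and pos: "\<And>X. X \<in> m \<Longrightarrow> X \<noteq> 0 \<Longrightarrow> ip X X > 0"
    and symB: "\<And>X Y. B X Y = B Y X" and symip: "\<And>X Y. ip X Y = ip Y X"
  shows "subspace V \<Longrightarrow> V \<subseteq> m \<Longrightarrow> \<exists>Ob. onb ip V Ob \<and> (\<forall>e\<in>Ob. \<exists>mu. \<forall>Z\<in>V. B e Z = mu * ip e Z)"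
proof (induction "dim V" arbitrary: V rule: less_induct)
  case less
  note V = less.prems(1) and Vm = less.prems(2)
  show ?case
  proof (cases "V = {0}")
    case True
    thus ?thesis by (intro exI[of _ "{}"]) (simp add: onb_def)
  next
    case False
    obtain X0 l where X0: "X0 \<in> V" "X0 \<noteq> 0" and eig: "\<And>Z. Z \<in> V \<Longrightarrow> B X0 Z = l * ip X0 Z"
      using exists_eigvec[OF V False bB bip _ symB symip] pos Vm by blast
    have p0: "ip X0 X0 > 0" using pos X0 Vm by auto
    define e0 where "e0 = (1 / sqrt (ip X0 X0)) *\<^sub>R X0"
    have e0V: "e0 \<in> V" unfolding e0_def using X0 V by (simp add: subspace_scale)
    have e0n: "ip e0 e0 = 1" unfolding e0_def using p0
      by (simp add: bilinear_lmul[OF bip] bilinear_rmul[OF bip])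
    have eig0: "B e0 Z = l * ip e0 Z" if "Z \<in> V" for Z unfolding e0_def
      using eig[OF that] by (simp add: bilinear_lmul[OF bip] bilinear_lmul[OF bB])
    define V' where "V' = {Z \<in> V. ip e0 Z = 0}"
    have V'sub: "subspace V'" unfolding V'_def subspace_def
      using V by (auto simp: subspace_0 subspace_add subspace_scale bilinear_rzero[OF bip]
          bilinear_radd[OF bip] bilinear_rmul[OF bip])
    have "V' \<subset> V" unfolding V'_def using e0V e0n by (metis (mono_tags, lifting) mem_Collect_eq psubsetI subsetI zero_neq_one)
    moreover have "span V = V" "span V' = V'" using V V'sub by simp_all
    ultimately have "span V' \<subset> span V" by (simp del: span_eq_iff)
    hence "dim V' < dim V" by (rule dim_psubset)
    moreover have "V' \<subseteq> m" using Vm unfolding V'_def by auto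
    ultimately obtain Ob' where Ob': "onb ip V' Ob'" and eigOb': "\<forall>e\<in>Ob'. \<exists>mu. \<forall>Z\<in>V'. B e Z = mu * ip e Z"
      using less.hyps V'sub by blast
    have ObV': "Ob' \<subseteq> V'" and finOb': "finite Ob'" and spOb': "span Ob' = V'"
      and onOb': "\<forall>e\<in>Ob'. \<forall>e'\<in>Ob'. ip e e' = (if e = e' then 1 else 0)"
      using Ob' unfolding onb_def by auto
    have decomp: "Z - ip e0 Z *\<^sub>R e0 \<in> V'" if "Z \<in> V" for Z
      unfolding V'_def using that e0V V e0n
      by (simp add: subspace_diff subspace_scale bilinear_rsub[OF bip] bilinear_rmul[OF bip])
    have e0notOb': "e0 \<notin> Ob'" using ObV' e0n unfolding V'_def by auto
    have orth: "ip e0 e = 0" "ip e e0 = 0" if "e \<in> Ob'" for e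
      using that ObV' symip unfolding V'_def by auto
    define Ob where "Ob = insert e0 Ob'"
    have "span Ob = V"
    proof
      show "span Ob \<subseteq> V" using span_minimal[of Ob V] V e0V ObV' unfolding Ob_def V'_def by auto
      show "V \<subseteq> span Ob"
      proof
        fix Z assume Z: "Z \<in> V"
        have "Z - ip e0 Z *\<^sub>R e0 \<in> span Ob" using decomp[OF Z] spOb' span_mono[of Ob' Ob]
          unfolding Ob_def by auto
        moreover have "ip e0 Z *\<^sub>R e0 \<in> span Ob" unfolding Ob_def by (simp add: span_base span_scale)
        ultimately have "(Z - ip e0 Z *\<^sub>R e0) + ip e0 Z *\<^sub>R e0 \<in> span Ob" by (rule span_add)
        thus "Z \<in> span Ob" by simp
      qed
    qed
    hence "onb ip V Ob" unfolding onb_def Ob_def using finOb' e0V ObV' onOb' e0n orth e0notOb'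
      unfolding V'_def by auto
    moreover have "\<forall>e\<in>Ob. \<exists>mu. \<forall>Z\<in>V. B e Z = mu * ip e Z"
    proof
      fix e assume "e \<in> Ob"
      show "\<exists>mu. \<forall>Z\<in>V. B e Z = mu * ip e Z"
      proof (cases "e = e0")
        case True thus ?thesis using eig0 by blast
      next
        case False
        hence eOb': "e \<in> Ob'" using \<open>e \<in> Ob\<close> Ob_def by auto
        then obtain mu where mu: "\<And>Z. Z \<in> V' \<Longrightarrow> B e Z = mu * ip e Z" using eigOb' by blast
        have "B e Z = mu * ip e Z" if Z: "Z \<in> V" for Z
        proof -
          define c where "c = ip e0 Z"
          have Zd: "Z = (Z - c *\<^sub>R e0) + c *\<^sub>R e0" by simp
          have "B e Z = B e (Z - c *\<^sub>R e0) + c * B e e0"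
            by (simp add: bilinear_rsub[OF bB] bilinear_rmul[OF bB])
          also have "B e e0 = 0" using symB[of e e0] eig0[of e] orth[OF eOb'] ObV' eOb' unfolding V'_def by auto
          also have "B e (Z - c *\<^sub>R e0) = mu * ip e (Z - c *\<^sub>R e0)"
            using mu decomp[OF Z] unfolding c_def by blast
          also have "ip e (Z - c *\<^sub>R e0) = ip e Z"
            using orth[OF eOb'] by (simp add: bilinear_rsub[OF bip] bilinear_rmul[OF bip])
          finally show ?thesis by simp
        qed
        thus ?thesis by blast
      qed
    qed
    ultimately show ?thesis by blast
  qed
qed


lemma lin_trace_onb:
  fixes f :: "'g::euclidean_space \<Rightarrow> 'g"
  assumes V: "subspace V" and Ob: "onb ip V Ob" and bip: "bilinear ip" and f: "linear f"
    and fV: "\<And>x. x \<in> V \<Longrightarrow> f x \<in> V"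
  shows "lin_trace V f = (\<Sum>e\<in>Ob. ip (f e) e)"
proof -
  have ex: "\<exists>B. independent B \<and> span B = V"
  proof -
    obtain B where B: "B \<subseteq> V" "independent B" "V \<subseteq> span B" "card B = dim V" by (rule basis_exists)
    have "span B \<subseteq> V" using span_minimal[OF B(1) V] .
    thus ?thesis using B by blast
  qed
  define B where "B = (SOME B. independent B \<and> span B = V)"
  have B: "independent B" "span B = V" using someI_ex[OF ex] unfolding B_def by auto
  have finB: "finite B" using B(1) by (rule finiteI_independent)
  have finO: "finite Ob" and ObV: "Ob \<subseteq> V" using Ob unfolding onb_def by auto
  have "(\<Sum>e\<in>Ob. ip (f e) e) = (\<Sum>e\<in>Ob. \<Sum>b\<in>B. representation B e b * ip (f b) e)"
  proof (rule sum.cong[OF refl])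
    fix e assume e: "e \<in> Ob"
    have "e \<in> span B" using e ObV B by auto
    hence "e = (\<Sum>b\<in>B. representation B e b *\<^sub>R b)"
      using sum_representation_eq[OF B(1) _ finB] by simp
    hence "f e = f (\<Sum>b\<in>B. representation B e b *\<^sub>R b)" by (rule arg_cong)
    hence "f e = (\<Sum>b\<in>B. representation B e b *\<^sub>R f b)"
      by (simp add: linear_sum[OF f] linear_scale[OF f])
    thus "ip (f e) e = (\<Sum>b\<in>B. representation B e b * ip (f b) e)"
      by (simp add: bil_suml[OF bip] bilinear_lmul[OF bip])
  qed
  also have "\<dots> = (\<Sum>b\<in>B. \<Sum>e\<in>Ob. representation B e b * ip (f b) e)"
    by (rule sum.swap)
  also have "\<dots> = (\<Sum>b\<in>B. representation B (f b) b)"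
  proof (rule sum.cong[OF refl])
    fix b assume b: "b \<in> B"
    have fbV: "f b \<in> V" using fV b B span_superset by blast
    have "representation B (f b) = representation B (\<Sum>e\<in>Ob. ip (f b) e *\<^sub>R e)"
      using onb_expand[OF Ob bip fbV] by simp
    also have "\<dots> = (\<lambda>c. \<Sum>e\<in>Ob. representation B (ip (f b) e *\<^sub>R e) c)"
      by (rule representation_sum[OF B(1)]) (use ObV B in \<open>auto intro: span_scale\<close>)
    finally have "representation B (f b) b = (\<Sum>e\<in>Ob. representation B (ip (f b) e *\<^sub>R e) b)" by simp
    also have "\<dots> = (\<Sum>e\<in>Ob. ip (f b) e * representation B e b)"
      by (rule sum.cong[OF refl]) (use ObV B in \<open>auto simp: representation_scale\<close>)
    finally show "(\<Sum>e\<in>Ob. representation B e b * ip (f b) e) = representation B (f b) b"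
      by (simp add: mult.commute)
  qed
  finally show ?thesis unfolding lin_trace_def Let_def B_def by simp
qed

lemma onb_indep:
  fixes G ip :: "'g::euclidean_space \<Rightarrow> 'g \<Rightarrow> real"
  assumes O1: "onb ip V O1" and O2: "onb ip V O2" and bip: "bilinear ip"
    and symip: "\<And>X Y. ip X Y = ip Y X" and G: "bilinear G"
  shows "(\<Sum>e\<in>O1. G e e) = (\<Sum>e\<in>O2. G e e)"
proof -
  have O1V: "O1 \<subseteq> V" and O2V: "O2 \<subseteq> V" using O1 O2 unfolding onb_def by auto
  have "(\<Sum>e\<in>O1. G e e) = (\<Sum>e\<in>O1. \<Sum>u\<in>O2. ip e u * G u e)"
  proof (rule sum.cong[OF refl])
    fix e assume "e \<in> O1"
    hence "e = (\<Sum>u\<in>O2. ip e u *\<^sub>R u)" using onb_expand[OF O2 bip] O1V by auto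
    hence "G e e = G (\<Sum>u\<in>O2. ip e u *\<^sub>R u) e" by (rule arg_cong[where f="\<lambda>x. G x e"])
    thus "G e e = (\<Sum>u\<in>O2. ip e u * G u e)" by (simp add: bil_suml[OF G] bilinear_lmul[OF G])
  qed
  also have "\<dots> = (\<Sum>u\<in>O2. \<Sum>e\<in>O1. ip u e * G u e)" by (subst sum.swap) (simp add: symip)
  also have "\<dots> = (\<Sum>u\<in>O2. G u u)"
  proof (rule sum.cong[OF refl])
    fix u assume "u \<in> O2"
    hence "u = (\<Sum>e\<in>O1. ip u e *\<^sub>R e)" using onb_expand[OF O1 bip] O2V by auto
    hence "G u u = G u (\<Sum>e\<in>O1. ip u e *\<^sub>R e)" by (rule arg_cong[where f="\<lambda>x. G u x"])
    thus "(\<Sum>e\<in>O1. ip u e * G u e) = G u u" by (simp add: bil_sumr[OF G] bilinear_rmul[OF G])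
  qed
  finally show ?thesis .
qed

lemma form_trace_onb:
  fixes G ip :: "'g::euclidean_space \<Rightarrow> 'g \<Rightarrow> real"
  assumes Ob: "onb ip V Ob" and bip: "bilinear ip" and symip: "\<And>X Y. ip X Y = ip Y X"
    and G: "bilinear G" and FG: "\<And>Y Z. Y \<in> V \<Longrightarrow> Z \<in> V \<Longrightarrow> F Y Z = G Y Z"
  shows "form_trace ip V F = (\<Sum>e\<in>Ob. G e e)"
proof -
  define O0 where "O0 = (SOME Ob. finite Ob \<and> Ob \<subseteq> V \<and> span Ob = V \<and>
        (\<forall>e\<in>Ob. \<forall>e'\<in>Ob. ip e e' = (if e = e' then 1 else 0)))"
  have "onb ip V O0" unfolding O0_def onb_def
    by (rule someI_ex) (use Ob in \<open>auto simp: onb_def\<close>)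
  hence "(\<Sum>e\<in>O0. G e e) = (\<Sum>e\<in>Ob. G e e)" using onb_indep[OF _ Ob bip symip G] by blast
  moreover have "(\<Sum>e\<in>O0. F e e) = (\<Sum>e\<in>O0. G e e)"
    using \<open>onb ip V O0\<close> FG unfolding onb_def by (intro sum.cong) auto
  ultimately show ?thesis unfolding form_trace_def Let_def O0_def by simp
qed


locale setting =
  fixes brk :: "'g::euclidean_space \<Rightarrow> 'g \<Rightarrow> 'g" and h m :: "'g set" and ip :: "'g \<Rightarrow> 'g \<Rightarrow> real"
  assumes red: "reductive_decomp brk h m" and ipi: "inv_inner brk h m ip"
begin

lemma bbrk: "bilinear brk" and antis: "\<And>x y. brk x y = - brk y x"
  and subm: "subspace m" and subh: "subspace h" and hm: "h \<inter> m = {0}"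
  and dec: "\<And>x. \<exists>a\<in>h. \<exists>X\<in>m. x = a + X"
  using red unfolding reductive_decomp_def lie_bracket_def by blast+

lemma bip: "bilinear ip" and symip: "\<And>X Y. ip X Y = ip Y X"
  and pos: "\<And>X. X \<in> m \<Longrightarrow> X \<noteq> 0 \<Longrightarrow> ip X X > 0"
  using ipi unfolding inv_inner_def inv_sym_form_def by auto

abbreviation P where "P \<equiv> prm h m"

lemma prm_ex1: "\<exists>!X. X \<in> m \<and> x - X \<in> h"
proof -
  obtain a X where aX: "a \<in> h" "X \<in> m" "x = a + X" using dec by blast
  show ?thesis
  proof (rule ex1I[of _ X])
    show "X \<in> m \<and> x - X \<in> h" using aX by simp
    fix Y assume Y: "Y \<in> m \<and> x - Y \<in> h"
    have "X - Y \<in> m" using Y aX subm by (simp add: subspace_diff)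
    moreover have "X - Y \<in> h" using subspace_diff[OF subh, of "x - Y" "x - X"] Y aX by simp
    ultimately have "X - Y = 0" using hm by blast
    thus "Y = X" by simp
  qed
qed

lemma prm_char: "P x \<in> m" "x - P x \<in> h"
  using theI'[OF prm_ex1[of x]] unfolding prm_def by auto

lemma prm_unique: "X \<in> m \<Longrightarrow> x - X \<in> h \<Longrightarrow> P x = X"
  using prm_ex1[of x] prm_char[of x] by blast

lemma prm_lin: "linear P"
proof (rule linearI)
  fix x y
  show "P (x + y) = P x + P y"
  proof (rule prm_unique)
    show "P x + P y \<in> m" using prm_char subm by (simp add: subspace_add)
    have "(x - P x) + (y - P y) \<in> h" using prm_char subh by (simp add: subspace_add)
    thus "x + y - (P x + P y) \<in> h" by (simp add: algebra_simps)
  qed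
next
  fix c x
  show "P (c *\<^sub>R x) = c *\<^sub>R P x"
  proof (rule prm_unique)
    show "c *\<^sub>R P x \<in> m" using prm_char subm by (simp add: subspace_scale)
    have "c *\<^sub>R (x - P x) \<in> h" using prm_char subh by (simp add: subspace_scale)
    thus "c *\<^sub>R x - c *\<^sub>R P x \<in> h" by (simp add: algebra_simps)
  qed
qed

lemmas lsimps = bilinear_ladd[OF bbrk] bilinear_radd[OF bbrk] bilinear_lmul[OF bbrk] bilinear_rmul[OF bbrk]
  bilinear_lsub[OF bbrk] bilinear_rsub[OF bbrk] bilinear_lneg[OF bbrk] bilinear_rneg[OF bbrk]
  bilinear_ladd[OF bip] bilinear_radd[OF bip] bilinear_lmul[OF bip] bilinear_rmul[OF bip]
  bilinear_lsub[OF bip] bilinear_rsub[OF bip] bilinear_lneg[OF bip] bilinear_rneg[OF bip]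
  linear_add[OF prm_lin] linear_scale[OF prm_lin] linear_diff[OF prm_lin] linear_neg[OF prm_lin]

definition phi where
  "phi X Y Z = ip (P (brk X Y)) Z - ip X (P (brk Y Z)) - ip (P (brk X Z)) Y"

lemma phi_lin3: "linear (phi X Y)"
  by (rule linearI) (simp_all add: phi_def lsimps algebra_simps)

lemma phi_add1: "phi (X1 + X2) Y Z = phi X1 Y Z + phi X2 Y Z"
  and phi_scale1: "phi (c *\<^sub>R X) Y Z = c * phi X Y Z"
  and phi_add2: "phi X (Y1 + Y2) Z = phi X Y1 Z + phi X Y2 Z"
  and phi_scale2: "phi X (c *\<^sub>R Y) Z = c * phi X Y Z"
  by (simp_all add: phi_def lsimps algebra_simps)

lemma onb_m: "\<exists>Ob. onb ip m Ob"
proof -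
  have "\<exists>Ob. onb ip m Ob \<and> (\<forall>e\<in>Ob. \<exists>mu. \<forall>Z\<in>m. ip e Z = mu * ip e Z)"
    by (rule spectral[where B=ip and ip=ip and m=m and V=m, OF bip bip pos symip symip subm order_refl])
  thus ?thesis by (elim exE conjE) (rule exI)
qed

lemma ip_uniq:
  assumes "W \<in> m" "W' \<in> m" "\<And>Z. Z \<in> m \<Longrightarrow> ip W Z = ip W' Z"
  shows "W = W'"
proof (rule ccontr)
  assume "W \<noteq> W'"
  hence "ip (W - W') (W - W') > 0" using pos assms(1,2) subm by (simp add: subspace_diff)
  moreover have "ip (W - W') (W - W') = 0"
    using assms subm by (simp add: lsimps subspace_diff)
  ultimately show False by simp
qed

abbreviation al where "al \<equiv> lc_alpha brk h m ip"

lemma alpha_ex1: "\<exists>!W. W \<in> m \<and> (\<forall>Z\<in>m. 2 * ip W Z = phi X Y Z)"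
proof -
  obtain Ob where Ob: "onb ip m Ob" using onb_m by blast
  have ObV: "Ob \<subseteq> m" using Ob unfolding onb_def by auto
  define W where "W = (\<Sum>e\<in>Ob. (phi X Y e / 2) *\<^sub>R e)"
  have Wm: "W \<in> m" unfolding W_def using ObV subm
    by (intro subspace_sum) (auto intro: subspace_scale)
  have "2 * ip W Z = phi X Y Z" if Z: "Z \<in> m" for Z
  proof -
    have "2 * ip W Z = (\<Sum>e\<in>Ob. phi X Y e * ip e Z)"
      unfolding W_def by (simp add: bil_suml[OF bip] lsimps sum_distrib_left)
    also have "\<dots> = (\<Sum>e\<in>Ob. ip Z e * phi X Y e)" by (simp add: symip mult.commute)
    also have "\<dots> = phi X Y Z" using onb_lin[OF Ob bip phi_lin3 Z] by simp
    finally show ?thesis .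
  qed
  hence ex: "W \<in> m \<and> (\<forall>Z\<in>m. 2 * ip W Z = phi X Y Z)" using Wm by blast
  show ?thesis
  proof (rule ex1I[of _ W])
    show "W \<in> m \<and> (\<forall>Z\<in>m. 2 * ip W Z = phi X Y Z)" by (rule ex)
  next
    fix W' assume W': "W' \<in> m \<and> (\<forall>Z\<in>m. 2 * ip W' Z = phi X Y Z)"
    show "W' = W"
    proof (rule ip_uniq)
      show "W' \<in> m" using W' by simp
      show "W \<in> m" using ex by simp
      fix Z assume Z: "Z \<in> m"
      have "2 * ip W' Z = 2 * ip W Z" using W' ex Z by simp
      thus "ip W' Z = ip W Z" by simp
    qed
  qed
qed

lemma alpha_char: "al X Y \<in> m" "\<And>Z. Z \<in> m \<Longrightarrow> 2 * ip (al X Y) Z = phi X Y Z"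
  using theI'[OF alpha_ex1[of X Y]] unfolding lc_alpha_def phi_def[symmetric] by auto

lemma alpha_eqI:
  assumes "W \<in> m" "\<And>Z. Z \<in> m \<Longrightarrow> 2 * ip W Z = phi X Y Z"
  shows "al X Y = W"
proof (rule ip_uniq[OF alpha_char(1) assms(1)])
  fix Z assume "Z \<in> m"
  thus "ip (al X Y) Z = ip W Z" using alpha_char(2)[of Z X Y, OF \<open>Z \<in> m\<close>] assms(2)[OF \<open>Z \<in> m\<close>] by simp
qed

lemma alpha_bil: "bilinear al"
  unfolding bilinear_def
proof (intro allI conjI linearI)
  fix X Y1 Y2 show "al X (Y1 + Y2) = al X Y1 + al X Y2"
    by (rule alpha_eqI) (simp_all add: alpha_char subspace_add[OF subm] lsimps phi_add2)
next
  fix X c Y show "al X (c *\<^sub>R Y) = c *\<^sub>R al X Y"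
    by (rule alpha_eqI) (simp_all add: alpha_char subspace_scale[OF subm] lsimps phi_scale2)
next
  fix Y X1 X2 show "al (X1 + X2) Y = al X1 Y + al X2 Y"
    by (rule alpha_eqI) (simp_all add: alpha_char subspace_add[OF subm] lsimps phi_add1)
next
  fix Y c X show "al (c *\<^sub>R X) Y = c *\<^sub>R al X Y"
    by (rule alpha_eqI) (simp_all add: alpha_char subspace_scale[OF subm] lsimps phi_scale1)
qed

lemma alpha_skew: "Y \<in> m \<Longrightarrow> Z \<in> m \<Longrightarrow> ip (al X Y) Z = - ip Y (al X Z)"
proof -
  assume Y: "Y \<in> m" and Z: "Z \<in> m"
  have "2 * ip (al X Y) Z + 2 * ip (al X Z) Y = phi X Y Z + phi X Z Y"
    using alpha_char Y Z by simp
  also have "\<dots> = 0"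
    unfolding phi_def using antis[of Z Y] symip[of X "P (brk Z Y)"] symip[of X "P (brk Y Z)"]
    by (simp add: lsimps)
  finally show ?thesis using symip[of Y "al X Z"] by simp
qed

lemma alpha_diff: "al X Y - al Y X = P (brk X Y)"
proof (rule ip_uniq)
  show "al X Y - al Y X \<in> m" using alpha_char(1) subm by (simp add: subspace_diff)
  show "P (brk X Y) \<in> m" by (rule prm_char)
  fix Z assume Z: "Z \<in> m"
  have e1: "2 * ip (al X Y) Z = phi X Y Z" "2 * ip (al Y X) Z = phi Y X Z"
    using alpha_char(2) Z by auto
  have e2: "ip (al X Y - al Y X) Z = ip (al X Y) Z - ip (al Y X) Z"
    by (rule bilinear_lsub[OF bip])
  have e3: "phi X Y Z - phi Y X Z = 2 * ip (P (brk X Y)) Z"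
  proof -
    have a: "P (brk Y X) = - P (brk X Y)" using antis[of Y X] linear_neg[OF prm_lin] by simp
    have b: "ip X (P (brk Y Z)) = ip (P (brk Y Z)) X" "ip Y (P (brk X Z)) = ip (P (brk X Z)) Y"
      by (rule symip)+
    show ?thesis unfolding phi_def a b bilinear_lneg[OF bip] by simp
  qed
  show "ip (al X Y - al Y X) Z = ip (P (brk X Y)) Z" using e1 e2 e3 by simp
qed

end



lemma alg1:
  fixes a b c x y z :: real
  assumes "x \<noteq> z" "y \<noteq> x" "(y - z) * a = (x - z) * b" "(y - x) * c = (y - z) * a"
  shows "a * b - (a - b) * c = 2 * (y - z) * a ^ 2 / (x - z)"
proof -
  have "(a * b - (a - b) * c) * (x - z) = 2 * (y - z) * a ^ 2" using assms(3,4) by algebra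
  thus ?thesis using assms(1) by (simp add: eq_divide_eq)
qed

lemma alg2:
  fixes a c x y z :: real
  assumes "x \<noteq> z" "y \<noteq> x" "(y - x) * c = (y - z) * a" "(y - z) * (y - x) > 0"
  shows "2 * (y - z) * a ^ 2 / (x - z) + 2 * (y - x) * c ^ 2 / (z - x) \<le> 0"
proof -
  define S1 where "S1 = 2 * (y - z) * a ^ 2 / (x - z)"
  define S2 where "S2 = 2 * (y - x) * c ^ 2 / (z - x)"
  have h1: "S1 * (x - z) = 2 * (y - z) * a ^ 2" unfolding S1_def using assms(1) by simp
  have h2: "S2 * (z - x) = 2 * (y - x) * c ^ 2" unfolding S2_def using assms(1) by simp
  have "((S1 + S2) * (y - x) + 2 * (y - z) * a ^ 2) * (x - z) = 0" using h1 h2 assms(3) by algebra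
  hence "(S1 + S2) * (y - x) + 2 * (y - z) * a ^ 2 = 0" using assms(1) by (simp only: mult_eq_0_iff) simp
  hence "(S1 + S2) * (y - x) = - 2 * (y - z) * a ^ 2" by linarith
  hence eq: "(S1 + S2) * (y - x) = - 2 * (y - z) * a ^ 2" .
  have "(S1 + S2) * ((y - z) * (y - x)) = ((S1 + S2) * (y - x)) * (y - z)" by (simp add: algebra_simps)
  also have "\<dots> = (- 2 * (y - z) * a ^ 2) * (y - z)" by (simp only: eq)
  also have "\<dots> = - 2 * ((y - z) ^ 2 * a ^ 2)" by (simp add: algebra_simps power2_eq_square)
  also have "\<dots> \<le> 0" by simp
  finally have le: "(S1 + S2) * ((y - z) * (y - x)) \<le> 0" .
  have "S1 + S2 \<le> 0"
  proof (rule ccontr)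
    assume "\<not> S1 + S2 \<le> 0"
    hence "S1 + S2 > 0" by simp
    hence "(S1 + S2) * ((y - z) * (y - x)) > 0" using assms(4) by (rule mult_pos_pos)
    thus False using le by simp
  qed
  thus ?thesis unfolding S1_def S2_def .
qed

lemma alg3:
  fixes x y z :: real
  assumes "x \<noteq> y" "y \<noteq> z" "z \<noteq> x"
  shows "2 / ((y - z) * (x - z)) + 2 / ((z - x) * (y - x)) + 2 / ((x - y) * (z - y)) = 0"
proof -
  define u where "u = 2 / ((y - z) * (x - z))"
  define v where "v = 2 / ((z - x) * (y - x))"
  define w where "w = 2 / ((x - y) * (z - y))"
  have hu: "u * ((y - z) * (x - z)) = 2" unfolding u_def using assms by simp
  have hv: "v * ((z - x) * (y - x)) = 2" unfolding v_def using assms by simp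
  have hw: "w * ((x - y) * (z - y)) = 2" unfolding w_def using assms by simp
  have "u * ((x - y) * (y - z) * (z - x)) = (u * ((y - z) * (x - z))) * (y - x)" by (simp add: algebra_simps)
  hence e1: "u * ((x - y) * (y - z) * (z - x)) = 2 * (y - x)" using hu by simp
  have "v * ((x - y) * (y - z) * (z - x)) = (v * ((z - x) * (y - x))) * (z - y)" by (simp add: algebra_simps)
  hence e2: "v * ((x - y) * (y - z) * (z - x)) = 2 * (z - y)" using hv by simp
  have "w * ((x - y) * (y - z) * (z - x)) = (w * ((x - y) * (z - y))) * (x - z)" by (simp add: algebra_simps)
  hence e3: "w * ((x - y) * (y - z) * (z - x)) = 2 * (x - z)" using hw by simp
  have "(u + v + w) * ((x - y) * (y - z) * (z - x)) = 0" using e1 e2 e3 by (simp add: distrib_right)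
  hence "u + v + w = 0" using assms by simp
  thus ?thesis unfolding u_def v_def w_def .
qed

lemma alg4:
  fixes a x y z :: real
  assumes "y \<noteq> z" "x \<noteq> z"
  shows "2 * (y - z) * a ^ 2 / (x - z) = 2 / ((y - z) * (x - z)) * ((y - z) * a) ^ 2"
proof -
  have yz: "y - z \<noteq> 0" and xz: "x - z \<noteq> 0" using assms by auto
  have "2 / ((y - z) * (x - z)) * ((y - z) * a) ^ 2 = (2 * (y - z) * a ^ 2) * ((y - z) / ((y - z) * (x - z)))"
    by (simp add: power2_eq_square)
  also have "(y - z) / ((y - z) * (x - z)) = 1 / (x - z)" using yz by simp
  finally show ?thesis by simp
qed

definition gg :: "real \<Rightarrow> real \<Rightarrow> real \<Rightarrow> real \<Rightarrow> real" where
  "gg x y z a = (if z \<noteq> x \<and> z \<noteq> y then 2 * (y - z) * a ^ 2 / (x - z) else 0)"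

locale main = setting brk h m ip
  for brk :: "'g::euclidean_space \<Rightarrow> 'g \<Rightarrow> 'g" and h m :: "'g set" and ip :: "'g \<Rightarrow> 'g \<Rightarrow> real" +
  fixes A :: "'g \<Rightarrow> 'g \<Rightarrow> real" and r :: nat and lam :: "nat \<Rightarrow> real"
  assumes Ainv: "inv_sym_form brk h m A" and cod: "codazzi brk h m ip A"
    and lam_mono: "strict_mono_on {1..r} lam"
    and eigvals: "{l. eigsp m ip A l \<noteq> {0}} = lam ` {1..r}"
begin

lemma bA: "bilinear A" and symA: "\<And>X Y. A X Y = A Y X"
  using Ainv unfolding inv_sym_form_def by blast+

abbreviation E where "E l \<equiv> eigsp m ip A l"

lemma E_m: "X \<in> E l \<Longrightarrow> X \<in> m" and E_eq: "X \<in> E l \<Longrightarrow> Y \<in> m \<Longrightarrow> A X Y = l * ip X Y"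
  unfolding eigsp_def by auto

lemma E_sub: "subspace (E l)"
  unfolding subspace_def eigsp_def
  using subm by (auto simp: subspace_0 subspace_add subspace_scale bilinear_lzero[OF bA] bilinear_lzero[OF bip]
      bilinear_ladd[OF bA] bilinear_ladd[OF bip] bilinear_lmul[OF bA] bilinear_lmul[OF bip] algebra_simps)

lemma eig_orth:
  assumes "X \<in> E x" "Y \<in> E y" "x \<noteq> y" shows "ip X Y = 0"
proof -
  have "A X Y = x * ip X Y" using assms E_eq E_m by blast
  moreover have "A Y X = y * ip Y X" using assms E_eq E_m by blast
  ultimately have "x * ip X Y = y * ip X Y" using symA[of X Y] symip[of X Y] by metis
  hence "(x - y) * ip X Y = 0" by (simp add: left_diff_distrib)
  thus ?thesis using assms(3) by simp
qed

lemma cod_eig: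
  assumes X: "X \<in> E x" and Y: "Y \<in> E y" and Z: "Z \<in> E z"
  shows "(y - z) * ip (al X Y) Z = (x - z) * ip (al Y X) Z"
proof -
  have Xm: "X \<in> m" and Ym: "Y \<in> m" and Zm: "Z \<in> m" using X Y Z E_m by auto
  have c: "- A (al X Y) Z - A Y (al X Z) = - A (al Y X) Z - A X (al Y Z)"
    using cod Xm Ym Zm unfolding codazzi_def by blast
  have "A (al X Y) Z = z * ip (al X Y) Z"
    using symA[of "al X Y" Z] E_eq[OF Z alpha_char(1)] symip[of Z "al X Y"] by simp
  moreover have "A Y (al X Z) = - y * ip (al X Y) Z"
    using E_eq[OF Y alpha_char(1)] alpha_skew[OF Ym Zm, of X] by simp
  moreover have "A (al Y X) Z = z * ip (al Y X) Z"
    using symA[of "al Y X" Z] E_eq[OF Z alpha_char(1)] symip[of Z "al Y X"] by simp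
  moreover have "A X (al Y Z) = - x * ip (al Y X) Z"
    using E_eq[OF X alpha_char(1)] alpha_skew[OF Xm Zm, of Y] by simp
  ultimately show ?thesis using c by (simp add: algebra_simps)
qed

lemma ex_eigbasis: "\<exists>Ob mu. onb ip m Ob \<and> (\<forall>e\<in>Ob. e \<in> E (mu e))"
proof -
  have "\<exists>Ob. onb ip m Ob \<and> (\<forall>e\<in>Ob. \<exists>mu. \<forall>Z\<in>m. A e Z = mu * ip e Z)"
    by (rule spectral[where B=A and ip=ip and m=m and V=m, OF bA bip pos symA symip subm order_refl])
  then obtain Ob where Ob: "onb ip m Ob" and ev: "\<forall>e\<in>Ob. \<exists>mu. \<forall>Z\<in>m. A e Z = mu * ip e Z" by blast
  from ev obtain mu where mu: "\<forall>e\<in>Ob. \<forall>Z\<in>m. A e Z = mu e * ip e Z" by metis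
  have "\<forall>e\<in>Ob. e \<in> E (mu e)" using mu Ob unfolding onb_def eigsp_def by auto
  thus ?thesis using Ob by blast
qed

end


locale main2 = main brk h m ip A r lam
  for brk :: "'g::euclidean_space \<Rightarrow> 'g \<Rightarrow> 'g" and h m :: "'g set" and ip :: "'g \<Rightarrow> 'g \<Rightarrow> real"
    and A :: "'g \<Rightarrow> 'g \<Rightarrow> real" and r :: nat and lam :: "nat \<Rightarrow> real" +
  fixes Ob :: "'g set" and mu :: "'g \<Rightarrow> real"
  assumes Ob: "onb ip m Ob" and eigOb: "\<And>e. e \<in> Ob \<Longrightarrow> e \<in> E (mu e)"
begin

lemma finOb: "finite Ob" and ObV: "Ob \<subseteq> m" and spOb: "span Ob = m"
  and onOb: "\<And>e e'. e \<in> Ob \<Longrightarrow> e' \<in> Ob \<Longrightarrow> ip e e' = (if e = e' then 1 else 0)"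
  using Ob unfolding onb_def by auto

lemma in_E_crit:
  assumes W: "W \<in> m" and z: "\<And>e. e \<in> Ob \<Longrightarrow> mu e \<noteq> x \<Longrightarrow> ip W e = 0"
  shows "W \<in> E x"
proof -
  have "W = (\<Sum>e\<in>Ob. ip W e *\<^sub>R e)" by (rule onb_expand[OF Ob bip W])
  also have "\<dots> = (\<Sum>e\<in>Ob. (if mu e = x then ip W e else 0) *\<^sub>R e)"
    by (rule sum.cong) (auto simp: z)
  also have "\<dots> \<in> E x"
    by (rule subspace_sum[OF E_sub]) (use eigOb in \<open>auto intro: subspace_scale[OF E_sub] subspace_0[OF E_sub]\<close>)
  finally show ?thesis .
qed

lemma E_orth_Ob: "X \<in> E x \<Longrightarrow> e \<in> Ob \<Longrightarrow> mu e \<noteq> x \<Longrightarrow> ip X e = 0"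
  using eig_orth eigOb by metis

definition Obx where "Obx x = {e \<in> Ob. mu e = x}"

lemma onb_E: "onb ip (E x) (Obx x)"
  unfolding onb_def
proof (intro conjI)
  show "finite (Obx x)" using finOb unfolding Obx_def by simp
  show sub: "Obx x \<subseteq> E x" using eigOb unfolding Obx_def by auto
  show "\<forall>e\<in>Obx x. \<forall>e'\<in>Obx x. ip e e' = (if e = e' then 1 else 0)" using onOb unfolding Obx_def by auto
  show "span (Obx x) = E x"
  proof
    show "span (Obx x) \<subseteq> E x" by (rule span_minimal[OF sub E_sub])
    show "E x \<subseteq> span (Obx x)"
    proof
      fix X assume X: "X \<in> E x"
      have "X = (\<Sum>e\<in>Ob. ip X e *\<^sub>R e)" by (rule onb_expand[OF Ob bip E_m[OF X]])
      also have "\<dots> = (\<Sum>e\<in>Ob. (if mu e = x then ip X e *\<^sub>R e else 0))"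
        by (rule sum.cong) (auto simp: E_orth_Ob[OF X])
      also have "\<dots> = (\<Sum>e\<in>Obx x. ip X e *\<^sub>R e)"
        unfolding Obx_def using finOb by (simp add: sum.inter_filter)
      also have "\<dots> \<in> span (Obx x)"
        by (intro span_sum span_scale span_base)
      finally show "X \<in> span (Obx x)" .
    qed
  qed
qed

lemma alpha_E: assumes X: "X \<in> E x" and Z: "Z \<in> E x" shows "al X Z \<in> E x"
proof (rule in_E_crit[OF alpha_char(1)])
  fix e assume e: "e \<in> Ob" "mu e \<noteq> x"
  have Xm: "X \<in> m" and Zm: "Z \<in> m" and em: "e \<in> m" using X Z e ObV E_m by auto
  have "(mu e - x) * ip (al X e) Z = (x - x) * ip (al e X) Z" by (rule cod_eig[OF X eigOb[OF e(1)] Z])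
  hence "ip (al X e) Z = 0" using e(2) by simp
  thus "ip (al X Z) e = 0" using alpha_skew[OF Zm em, of X] symip[of Z "al X e"] by simp
qed

lemma prm_E: assumes X: "X \<in> E x" and Z: "Z \<in> E x" shows "P (brk X Z) \<in> E x"
  using alpha_diff[of X Z] alpha_E[OF X Z] alpha_E[OF Z X] subspace_diff[OF E_sub] by metis

lemma Rd_eq: "Rd brk h m ip X Y Z = al X (al Y Z) - al Y (al X Z) - al (P (brk X Y)) Z"
  unfolding Rd_def Let_def by simp

lemmas asimps = bilinear_ladd[OF alpha_bil] bilinear_radd[OF alpha_bil] bilinear_lmul[OF alpha_bil]
  bilinear_rmul[OF alpha_bil] bilinear_lsub[OF alpha_bil] bilinear_rsub[OF alpha_bil]

lemma Rd_m: "Rd brk h m ip X Y Z \<in> m"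
  unfolding Rd_eq using alpha_char(1) subm by (simp add: subspace_diff)

lemma Rd_E: "X \<in> E x \<Longrightarrow> Y \<in> E x \<Longrightarrow> Z \<in> E x \<Longrightarrow> Rd brk h m ip X Y Z \<in> E x"
  unfolding Rd_eq by (intro subspace_diff[OF E_sub] alpha_E prm_E)

lemma Rd_lin: "linear (\<lambda>X. Rd brk h m ip X Y Z)"
  by (rule linearI) (simp_all add: Rd_eq asimps lsimps algebra_simps)

lemma Rd_lin2: "linear (\<lambda>Y. Rd brk h m ip X Y Z)"
  by (rule linearI) (simp_all add: Rd_eq asimps lsimps algebra_simps)

lemma Rd_lin3: "linear (\<lambda>Z. Rd brk h m ip X Y Z)"
  by (rule linearI) (simp_all add: Rd_eq asimps lsimps algebra_simps)

lemma G_bil: "bilinear (\<lambda>Y Z. \<Sum>e\<in>S. ip (Rd brk h m ip e Y Z) e)"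
  unfolding bilinear_def
proof (intro allI conjI linearI)
  fix Y Z1 Z2 show "(\<Sum>e\<in>S. ip (Rd brk h m ip e Y (Z1 + Z2)) e) =
      (\<Sum>e\<in>S. ip (Rd brk h m ip e Y Z1) e) + (\<Sum>e\<in>S. ip (Rd brk h m ip e Y Z2) e)"
    by (simp add: linear_add[OF Rd_lin3] lsimps sum.distrib)
next
  fix Y c Z show "(\<Sum>e\<in>S. ip (Rd brk h m ip e Y (c *\<^sub>R Z)) e) = c *\<^sub>R (\<Sum>e\<in>S. ip (Rd brk h m ip e Y Z) e)"
    by (simp add: linear_scale[OF Rd_lin3] lsimps sum_distrib_left)
next
  fix Z Y1 Y2 show "(\<Sum>e\<in>S. ip (Rd brk h m ip e (Y1 + Y2) Z) e) =
      (\<Sum>e\<in>S. ip (Rd brk h m ip e Y1 Z) e) + (\<Sum>e\<in>S. ip (Rd brk h m ip e Y2 Z) e)"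
    by (simp add: linear_add[OF Rd_lin2] lsimps sum.distrib)
next
  fix Z c Y show "(\<Sum>e\<in>S. ip (Rd brk h m ip e (c *\<^sub>R Y) Z) e) = c *\<^sub>R (\<Sum>e\<in>S. ip (Rd brk h m ip e Y Z) e)"
    by (simp add: linear_scale[OF Rd_lin2] lsimps sum_distrib_left)
qed

lemma Ricd_m: "Ricd brk h m ip m Y Z = (\<Sum>e\<in>Ob. ip (Rd brk h m ip e Y Z) e)"
  unfolding Ricd_def by (rule lin_trace_onb[OF subm Ob bip Rd_lin Rd_m])

lemma Ricd_E: "Y \<in> E x \<Longrightarrow> Z \<in> E x \<Longrightarrow> Ricd brk h m ip (E x) Y Z = (\<Sum>e\<in>Obx x. ip (Rd brk h m ip e Y Z) e)"
  unfolding Ricd_def by (rule lin_trace_onb[OF E_sub onb_E bip Rd_lin Rd_E])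

lemma sd_m: "sd brk h m ip m = (\<Sum>Y\<in>Ob. \<Sum>e\<in>Ob. ip (Rd brk h m ip e Y Y) e)"
  unfolding sd_def by (rule form_trace_onb[OF Ob bip symip G_bil Ricd_m])

lemma sd_E: "sd brk h m ip (E x) = (\<Sum>Y\<in>Obx x. \<Sum>e\<in>Obx x. ip (Rd brk h m ip e Y Y) e)"
  unfolding sd_def by (rule form_trace_onb[OF onb_E bip symip G_bil Ricd_E])


lemma rel:
  assumes X: "X \<in> E x" and Y: "Y \<in> E y" and Z: "Z \<in> E z"
  shows "(y - x) * ip (al Z Y) X = (y - z) * ip (al X Y) Z"
proof -
  have Xm: "X \<in> m" and Zm: "Z \<in> m" using X Z E_m by auto
  have c1: "(y - x) * ip (al Z Y) X = (z - x) * ip (al Y Z) X" by (rule cod_eig[OF Z Y X])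
  have c2: "(y - z) * ip (al X Y) Z = (x - z) * ip (al Y X) Z" by (rule cod_eig[OF X Y Z])
  have sk: "ip (al Y Z) X = - ip (al Y X) Z"
    using alpha_skew[OF Zm Xm, of Y] symip[of Z "al Y X"] by simp
  show ?thesis using c1 c2 sk by (simp add: algebra_simps)
qed

lemma cyc:
  assumes X: "X \<in> E x" and Y: "Y \<in> E y" and Z: "Z \<in> E z"
  shows "(y - z) * ip (al X Y) Z = (z - x) * ip (al Y Z) X"
proof -
  have Xm: "X \<in> m" and Zm: "Z \<in> m" using X Z E_m by auto
  have c2: "(y - z) * ip (al X Y) Z = (x - z) * ip (al Y X) Z" by (rule cod_eig[OF X Y Z])
  have sk: "ip (al Y Z) X = - ip (al Y X) Z"
    using alpha_skew[OF Zm Xm, of Y] symip[of Z "al Y X"] by simp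
  show ?thesis using c2 sk by (simp add: algebra_simps)
qed

lemma linR: "linear (ip a)"
  using bip unfolding bilinear_def by (metis (no_types) eta_contract_eq)

lemma term_eq:
  assumes X: "X \<in> E x" and Y: "Y \<in> E y" and xy: "x \<noteq> y"
  shows "ip (Rd brk h m ip X Y Y) X = (\<Sum>Z\<in>Ob. gg x y (mu Z) (ip (al X Y) Z))"
proof -
  have Xm: "X \<in> m" and Ym: "Y \<in> m" using X Y E_m by auto
  define W where "W = P (brk X Y)"
  have Wm: "W \<in> m" unfolding W_def by (rule prm_char)
  have T1: "ip (al X (al Y Y)) X = 0"
  proof -
    have "ip (al X (al Y Y)) X = - ip (al Y Y) (al X X)" by (rule alpha_skew[OF alpha_char(1) Xm])
    also have "ip (al Y Y) (al X X) = 0" using eig_orth[OF alpha_E[OF Y Y] alpha_E[OF X X]] xy by simp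
    finally show ?thesis by simp
  qed
  have T2: "ip (al Y (al X Y)) X = - (\<Sum>Z\<in>Ob. ip (al X Y) Z * ip (al Y X) Z)"
  proof -
    have "ip (al Y (al X Y)) X = - ip (al X Y) (al Y X)" by (rule alpha_skew[OF alpha_char(1) Xm])
    also have "ip (al X Y) (al Y X) = (\<Sum>Z\<in>Ob. ip (al Y X) Z * ip (al X Y) Z)"
      by (rule onb_lin[OF Ob bip linR alpha_char(1)])
    finally show ?thesis by (simp add: mult.commute)
  qed
  have linW: "linear (\<lambda>w. ip (al w Y) X)"
    by (rule linearI) (simp_all add: asimps lsimps)
  have T3: "ip (al W Y) X = (\<Sum>Z\<in>Ob. (ip (al X Y) Z - ip (al Y X) Z) * ip (al Z Y) X)"
  proof -
    have "ip (al W Y) X = (\<Sum>Z\<in>Ob. ip W Z * ip (al Z Y) X)"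
      by (rule onb_lin[OF Ob bip linW Wm])
    also have "\<dots> = (\<Sum>Z\<in>Ob. (ip (al X Y) Z - ip (al Y X) Z) * ip (al Z Y) X)"
      unfolding W_def alpha_diff[symmetric] by (simp add: lsimps)
    finally show ?thesis .
  qed
  have "ip (Rd brk h m ip X Y Y) X = ip (al X (al Y Y)) X - ip (al Y (al X Y)) X - ip (al W Y) X"
    unfolding Rd_eq W_def by (simp add: lsimps)
  also have "\<dots> = (\<Sum>Z\<in>Ob. ip (al X Y) Z * ip (al Y X) Z - (ip (al X Y) Z - ip (al Y X) Z) * ip (al Z Y) X)"
    unfolding T1 T2 T3 by (simp add: sum_subtractf)
  also have "\<dots> = (\<Sum>Z\<in>Ob. gg x y (mu Z) (ip (al X Y) Z))"
  proof (rule sum.cong[OF refl])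
    fix Z assume ZO: "Z \<in> Ob"
    define z where "z = mu Z"
    have Z: "Z \<in> E z" using eigOb[OF ZO] unfolding z_def .
    have Zm: "Z \<in> m" using Z E_m by auto
    define a where "a = ip (al X Y) Z"
    define b where "b = ip (al Y X) Z"
    define c where "c = ip (al Z Y) X"
    have "a * b - (a - b) * c = gg x y z a"
    proof (cases "z = x")
      case True
      have "a = 0" unfolding a_def using alpha_skew[OF Ym Zm, of X]
          eig_orth[OF Y alpha_E[OF X Z[unfolded True]]] xy by simp
      moreover have "c = 0" unfolding c_def using alpha_skew[OF Ym Xm, of Z]
          eig_orth[OF Y alpha_E[OF Z[unfolded True] X]] xy by simp
      ultimately show ?thesis using True unfolding gg_def by simp
    next
      case zx: False
      show ?thesis
      proof (cases "z = y")
        case True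
        have "b = 0" unfolding b_def using alpha_skew[OF Xm Zm, of Y]
            eig_orth[OF X alpha_E[OF Y Z[unfolded True]]] xy by simp
        moreover have "c = 0" unfolding c_def
          using eig_orth[OF alpha_E[OF Z[unfolded True] Y] X] xy by simp
        ultimately show ?thesis using True unfolding gg_def by simp
      next
        case False
        have r1: "(y - z) * a = (x - z) * b" unfolding a_def b_def by (rule cod_eig[OF X Y Z])
        have r2: "(y - x) * c = (y - z) * a" unfolding a_def c_def by (rule rel[OF X Y Z])
        have "a * b - (a - b) * c = 2 * (y - z) * a ^ 2 / (x - z)"
          by (rule alg1) (use zx xy r1 r2 in auto)
        thus ?thesis using zx False unfolding gg_def by simp
      qed
    qed
    thus "ip (al X Y) Z * ip (al Y X) Z - (ip (al X Y) Z - ip (al Y X) Z) * ip (al Z Y) X = gg x y (mu Z) (ip (al X Y) Z)"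
      unfolding a_def b_def c_def z_def .
  qed
  finally show ?thesis .
qed


lemma Ob_nz: "e \<in> Ob \<Longrightarrow> e \<noteq> 0"
  using onOb[of e e] bilinear_lzero[OF bip, of 0] by auto

lemma mu_range: "e \<in> Ob \<Longrightarrow> mu e \<in> lam ` {1..r}"
proof -
  assume e: "e \<in> Ob"
  have "E (mu e) \<noteq> {0}" using eigOb[OF e] Ob_nz[OF e] by auto
  thus ?thesis using eigvals by auto
qed

lemma part1:
  assumes Y: "Y \<in> E y"
    and ext: "\<And>u v. u \<in> mu ` Ob \<Longrightarrow> v \<in> mu ` Ob \<Longrightarrow> u \<noteq> y \<Longrightarrow> v \<noteq> y \<Longrightarrow> (y - u) * (y - v) > 0"
  shows "Ricd brk h m ip m Y Y \<le> Ricd brk h m ip (E y) Y Y"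
proof -
  define q where "q X = ip (Rd brk h m ip X Y Y) X" for X
  define F where "F X Z = (if mu X \<noteq> y then gg (mu X) y (mu Z) (ip (al X Y) Z) else 0)" for X Z
  have m_eq: "Ricd brk h m ip m Y Y = (\<Sum>X\<in>Ob. q X)" using Ricd_m unfolding q_def by simp
  have E_eq: "Ricd brk h m ip (E y) Y Y = (\<Sum>X\<in>Obx y. q X)" using Ricd_E[OF Y Y] unfolding q_def by simp
  have s1: "(\<Sum>X\<in>Obx y. q X) = (\<Sum>X\<in>Ob. if mu X = y then q X else 0)"
    unfolding Obx_def using finOb by (simp add: sum.inter_filter)
  have split: "(\<Sum>X\<in>Ob. q X) = (\<Sum>X\<in>Obx y. q X) + (\<Sum>X\<in>Ob. if mu X \<noteq> y then q X else 0)"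
    unfolding s1 sum.distrib[symmetric] by (rule sum.cong) auto
  have rest: "(\<Sum>X\<in>Ob. if mu X \<noteq> y then q X else 0) = (\<Sum>X\<in>Ob. \<Sum>Z\<in>Ob. F X Z)"
  proof (rule sum.cong[OF refl])
    fix X assume XO: "X \<in> Ob"
    show "(if mu X \<noteq> y then q X else 0) = (\<Sum>Z\<in>Ob. F X Z)"
    proof (cases "mu X = y")
      case True thus ?thesis unfolding F_def by simp
    next
      case False
      thus ?thesis unfolding F_def q_def using term_eq[OF eigOb[OF XO] Y False] by simp
    qed
  qed
  have pair: "F X Z + F Z X \<le> 0" if XO: "X \<in> Ob" and ZO: "Z \<in> Ob" for X Z
  proof -
    define x where "x = mu X"
    define z where "z = mu Z"
    have X: "X \<in> E x" and Z: "Z \<in> E z" using eigOb XO ZO unfolding x_def z_def by auto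
    show ?thesis
    proof (cases "x = y \<or> z = y \<or> x = z")
      case True
      hence "F X Z = 0" "F Z X = 0" unfolding F_def gg_def x_def z_def by auto
      thus ?thesis by simp
    next
      case False
      hence xy: "x \<noteq> y" and zy: "z \<noteq> y" and xz: "x \<noteq> z" by auto
      have FXZ: "F X Z = 2 * (y - z) * (ip (al X Y) Z) ^ 2 / (x - z)"
        unfolding F_def gg_def using xy zy xz x_def z_def by auto
      have FZX: "F Z X = 2 * (y - x) * (ip (al Z Y) X) ^ 2 / (z - x)"
        unfolding F_def gg_def using xy zy xz x_def z_def by auto
      have r: "(y - x) * ip (al Z Y) X = (y - z) * ip (al X Y) Z" by (rule rel[OF X Y Z])
      have pos: "(y - z) * (y - x) > 0" using ext[of z x] XO ZO zy xy unfolding x_def z_def by auto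
      show ?thesis unfolding FXZ FZX by (rule alg2) (use xz xy r pos in auto)
    qed
  qed
  have "2 * (\<Sum>X\<in>Ob. \<Sum>Z\<in>Ob. F X Z) = (\<Sum>X\<in>Ob. \<Sum>Z\<in>Ob. F X Z) + (\<Sum>X\<in>Ob. \<Sum>Z\<in>Ob. F Z X)"
    by (subst (2) sum.swap) simp
  also have "\<dots> = (\<Sum>X\<in>Ob. \<Sum>Z\<in>Ob. F X Z + F Z X)" by (simp add: sum.distrib)
  also have "\<dots> \<le> 0" by (intro sum_nonpos) (use pair in auto)
  finally have "(\<Sum>X\<in>Ob. \<Sum>Z\<in>Ob. F X Z) \<le> 0" by simp
  thus ?thesis unfolding m_eq E_eq split rest by simp
qed

lemma cyc_sum:
  fixes f :: "'a \<Rightarrow> 'a \<Rightarrow> 'a \<Rightarrow> real"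
  shows "(\<Sum>x\<in>S. \<Sum>y\<in>S. \<Sum>z\<in>S. f y z x) = (\<Sum>x\<in>S. \<Sum>y\<in>S. \<Sum>z\<in>S. f x y z)"
proof -
  have "(\<Sum>x\<in>S. \<Sum>y\<in>S. \<Sum>z\<in>S. f y z x) = (\<Sum>y\<in>S. \<Sum>x\<in>S. \<Sum>z\<in>S. f y z x)"
    by (rule sum.swap)
  also have "\<dots> = (\<Sum>y\<in>S. \<Sum>z\<in>S. \<Sum>x\<in>S. f y z x)"
    by (rule sum.cong[OF refl]) (rule sum.swap)
  finally show ?thesis .
qed

definition DD :: "real \<Rightarrow> real \<Rightarrow> real \<Rightarrow> real" where
  "DD x y z = (if x \<noteq> y \<and> y \<noteq> z \<and> z \<noteq> x then 2 / ((y - z) * (x - z)) else 0)"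

lemma DD_sum: "DD x y z + DD y z x + DD z x y = 0"
  unfolding DD_def using alg3[of x y z] by auto

lemma part2: "(\<Sum>i=1..r. sd brk h m ip (E (lam i))) = sd brk h m ip m"
proof -
  define q where "q X Y = ip (Rd brk h m ip X Y Y) X" for X Y
  have inj: "inj_on lam {1..r}" by (rule strict_mono_on_imp_inj_on[OF lam_mono])
  have "(\<Sum>i=1..r. sd brk h m ip (E (lam i))) = (\<Sum>i\<in>{1..r}. \<Sum>Y\<in>Obx (lam i). \<Sum>X\<in>Obx (lam i). q X Y)"
    unfolding sd_E q_def by simp
  also have "\<dots> = (\<Sum>l\<in>lam ` {1..r}. \<Sum>Y\<in>Obx l. \<Sum>X\<in>Obx l. q X Y)"
    using sum.reindex[OF inj, of "\<lambda>l. \<Sum>Y\<in>Obx l. \<Sum>X\<in>Obx l. q X Y"] by (simp add: comp_def)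
  also have "\<dots> = (\<Sum>l\<in>lam ` {1..r}. \<Sum>Y\<in>{Y. Y \<in> Ob \<and> mu Y = l}. \<Sum>X\<in>Obx (mu Y). q X Y)"
    unfolding Obx_def by (intro sum.cong refl) auto
  also have "\<dots> = (\<Sum>Y\<in>Ob. \<Sum>X\<in>Obx (mu Y). q X Y)"
    by (rule sum.group[OF finOb]) (use mu_range in auto)
  finally have L: "(\<Sum>i=1..r. sd brk h m ip (E (lam i))) = (\<Sum>Y\<in>Ob. \<Sum>X\<in>Obx (mu Y). q X Y)" .
  have R: "sd brk h m ip m = (\<Sum>Y\<in>Ob. \<Sum>X\<in>Obx (mu Y). q X Y) + (\<Sum>Y\<in>Ob. \<Sum>X\<in>Ob. if mu X \<noteq> mu Y then q X Y else 0)"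
  proof -
    have "sd brk h m ip m = (\<Sum>Y\<in>Ob. \<Sum>X\<in>Ob. q X Y)" unfolding sd_m q_def by simp
    also have "\<dots> = (\<Sum>Y\<in>Ob. (\<Sum>X\<in>Obx (mu Y). q X Y) + (\<Sum>X\<in>Ob. if mu X \<noteq> mu Y then q X Y else 0))"
    proof (rule sum.cong[OF refl])
      fix Y
      have "(\<Sum>X\<in>Obx (mu Y). q X Y) = (\<Sum>X\<in>Ob. if mu X = mu Y then q X Y else 0)"
        unfolding Obx_def using finOb by (simp add: sum.inter_filter)
      moreover have "(\<Sum>X\<in>Ob. q X Y) = (\<Sum>X\<in>Ob. (if mu X = mu Y then q X Y else 0) + (if mu X \<noteq> mu Y then q X Y else 0))"
        by (rule sum.cong) auto
      ultimately show "(\<Sum>X\<in>Ob. q X Y) = (\<Sum>X\<in>Obx (mu Y). q X Y) + (\<Sum>X\<in>Ob. if mu X \<noteq> mu Y then q X Y else 0)"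
        by (simp add: sum.distrib)
    qed
    also have "\<dots> = (\<Sum>Y\<in>Ob. \<Sum>X\<in>Obx (mu Y). q X Y) + (\<Sum>Y\<in>Ob. \<Sum>X\<in>Ob. if mu X \<noteq> mu Y then q X Y else 0)"
      by (rule sum.distrib)
    finally show ?thesis .
  qed
  define T where "T X Y Z = ((mu Y - mu Z) * ip (al X Y) Z) ^ 2" for X Y Z
  define f where "f X Y Z = DD (mu X) (mu Y) (mu Z) * T X Y Z" for X Y Z
  have Tcyc: "T Y Z X = T X Y Z" if "X \<in> Ob" "Y \<in> Ob" "Z \<in> Ob" for X Y Z
    unfolding T_def using cyc[OF eigOb[OF that(1)] eigOb[OF that(2)] eigOb[OF that(3)]] by simp
  have K: "(\<Sum>Y\<in>Ob. \<Sum>X\<in>Ob. if mu X \<noteq> mu Y then q X Y else 0) = (\<Sum>X\<in>Ob. \<Sum>Y\<in>Ob. \<Sum>Z\<in>Ob. f X Y Z)"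
  proof -
    have "(\<Sum>Y\<in>Ob. \<Sum>X\<in>Ob. if mu X \<noteq> mu Y then q X Y else 0) = (\<Sum>X\<in>Ob. \<Sum>Y\<in>Ob. if mu X \<noteq> mu Y then q X Y else 0)"
      by (rule sum.swap)
    also have "\<dots> = (\<Sum>X\<in>Ob. \<Sum>Y\<in>Ob. \<Sum>Z\<in>Ob. f X Y Z)"
    proof (intro sum.cong refl)
      fix X Y assume XO: "X \<in> Ob" and YO: "Y \<in> Ob"
      show "(if mu X \<noteq> mu Y then q X Y else 0) = (\<Sum>Z\<in>Ob. f X Y Z)"
      proof (cases "mu X = mu Y")
        case True thus ?thesis unfolding f_def DD_def by simp
      next
        case False
        have "q X Y = (\<Sum>Z\<in>Ob. gg (mu X) (mu Y) (mu Z) (ip (al X Y) Z))"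
          unfolding q_def by (rule term_eq[OF eigOb[OF XO] eigOb[OF YO] False])
        also have "\<dots> = (\<Sum>Z\<in>Ob. f X Y Z)"
        proof (rule sum.cong[OF refl])
          fix Z
          show "gg (mu X) (mu Y) (mu Z) (ip (al X Y) Z) = f X Y Z"
          proof (cases "mu Z \<noteq> mu X \<and> mu Z \<noteq> mu Y")
            case True
            hence yz: "mu Y - mu Z \<noteq> 0" and xz: "mu X - mu Z \<noteq> 0" by auto
            have "gg (mu X) (mu Y) (mu Z) (ip (al X Y) Z) = 2 * (mu Y - mu Z) * (ip (al X Y) Z) ^ 2 / (mu X - mu Z)"
              unfolding gg_def using True by simp
            also have "\<dots> = 2 / ((mu Y - mu Z) * (mu X - mu Z)) * ((mu Y - mu Z) * ip (al X Y) Z) ^ 2"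
              by (rule alg4) (use True in auto)
            also have "\<dots> = f X Y Z" unfolding f_def DD_def T_def using True False by auto
            finally show ?thesis .
          next
            case F2: False
            thus ?thesis unfolding gg_def f_def DD_def by auto
          qed
        qed
        finally show ?thesis using False by simp
      qed
    qed
    finally show ?thesis .
  qed
  define S where "S = (\<Sum>X\<in>Ob. \<Sum>Y\<in>Ob. \<Sum>Z\<in>Ob. f X Y Z)"
  have S1: "(\<Sum>X\<in>Ob. \<Sum>Y\<in>Ob. \<Sum>Z\<in>Ob. DD (mu Y) (mu Z) (mu X) * T X Y Z) = S"
  proof -
    have "(\<Sum>X\<in>Ob. \<Sum>Y\<in>Ob. \<Sum>Z\<in>Ob. DD (mu Y) (mu Z) (mu X) * T X Y Z) =
        (\<Sum>X\<in>Ob. \<Sum>Y\<in>Ob. \<Sum>Z\<in>Ob. f Y Z X)"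
      unfolding f_def by (intro sum.cong refl) (metis Tcyc)
    also have "\<dots> = S" unfolding S_def by (rule cyc_sum)
    finally show ?thesis .
  qed
  have S2: "(\<Sum>X\<in>Ob. \<Sum>Y\<in>Ob. \<Sum>Z\<in>Ob. DD (mu Z) (mu X) (mu Y) * T X Y Z) = S"
  proof -
    have "(\<Sum>X\<in>Ob. \<Sum>Y\<in>Ob. \<Sum>Z\<in>Ob. DD (mu Z) (mu X) (mu Y) * T X Y Z) =
        (\<Sum>X\<in>Ob. \<Sum>Y\<in>Ob. \<Sum>Z\<in>Ob. DD (mu Z) (mu X) (mu Y) * T Z X Y)"
      by (intro sum.cong refl) (metis Tcyc)
    also have "\<dots> = (\<Sum>X\<in>Ob. \<Sum>Y\<in>Ob. \<Sum>Z\<in>Ob. DD (mu Y) (mu Z) (mu X) * T Y Z X)"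
      by (rule cyc_sum)
    also have "\<dots> = (\<Sum>X\<in>Ob. \<Sum>Y\<in>Ob. \<Sum>Z\<in>Ob. DD (mu Y) (mu Z) (mu X) * T X Y Z)"
      by (intro sum.cong refl) (metis Tcyc)
    finally show ?thesis using S1 by simp
  qed
  have "3 * S = S + (\<Sum>X\<in>Ob. \<Sum>Y\<in>Ob. \<Sum>Z\<in>Ob. DD (mu Y) (mu Z) (mu X) * T X Y Z)
      + (\<Sum>X\<in>Ob. \<Sum>Y\<in>Ob. \<Sum>Z\<in>Ob. DD (mu Z) (mu X) (mu Y) * T X Y Z)"
    using S1 S2 by simp
  also have "\<dots> = (\<Sum>X\<in>Ob. \<Sum>Y\<in>Ob. \<Sum>Z\<in>Ob. (DD (mu X) (mu Y) (mu Z) + DD (mu Y) (mu Z) (mu X) + DD (mu Z) (mu X) (mu Y)) * T X Y Z)"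
    unfolding S_def f_def by (simp add: sum.distrib distrib_right)
  also have "\<dots> = 0" by (simp add: DD_sum)
  finally have "S = 0" by simp
  thus ?thesis using L R K S_def by simp
qed


lemma dcomp_E:
  assumes j: "j \<in> {1..r}" and Y: "Y \<in> m"
  shows "dcomp (\<lambda>i. E (lam i)) r j Y \<in> E (lam j)"
proof -
  define c where "c i = (\<Sum>e\<in>Obx (lam i). ip Y e *\<^sub>R e)" for i
  have cE: "c i \<in> E (lam i)" for i
  proof -
    have "Obx (lam i) \<subseteq> E (lam i)" using onb_E[of "lam i"] unfolding onb_def by blast
    thus ?thesis unfolding c_def by (intro subspace_sum[OF E_sub] subspace_scale[OF E_sub]) auto
  qed
  have inj: "inj_on lam {1..r}" by (rule strict_mono_on_imp_inj_on[OF lam_mono])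
  have sumc: "Y = (\<Sum>i=1..r. c i)"
  proof -
    have "Y = (\<Sum>e\<in>Ob. ip Y e *\<^sub>R e)" by (rule onb_expand[OF Ob bip Y])
    also have "\<dots> = (\<Sum>l\<in>lam ` {1..r}. \<Sum>e\<in>{e. e \<in> Ob \<and> mu e = l}. ip Y e *\<^sub>R e)"
      by (rule sum.group[OF finOb, symmetric]) (use mu_range in auto)
    also have "\<dots> = (\<Sum>l\<in>lam ` {1..r}. \<Sum>e\<in>Obx l. ip Y e *\<^sub>R e)"
      unfolding Obx_def by simp
    also have "\<dots> = (\<Sum>i=1..r. c i)"
      using sum.reindex[OF inj, of "\<lambda>l. \<Sum>e\<in>Obx l. ip Y e *\<^sub>R e"] unfolding c_def by (simp add: comp_def)
    finally show ?thesis .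
  qed
  have uniq: "f j = c j" if f: "\<forall>i\<in>{1..r}. f i \<in> E (lam i)" and fs: "Y = (\<Sum>i=1..r. f i)" for f
  proof -
    have co: "ip (f j) e = ip Y e" if e: "e \<in> Obx (lam j)" for e
    proof -
      have eE: "e \<in> E (lam j)" using e onb_E[of "lam j"] unfolding onb_def by blast
      have "ip Y e = (\<Sum>i\<in>{1..r}. ip (f i) e)" unfolding fs by (rule bil_suml[OF bip])
      also have "\<dots> = ip (f j) e + (\<Sum>i\<in>{1..r} - {j}. ip (f i) e)"
        by (rule sum.remove) (use j in auto)
      also have "(\<Sum>i\<in>{1..r} - {j}. ip (f i) e) = 0"
      proof (rule sum.neutral, rule ballI)
        fix i assume i: "i \<in> {1..r} - {j}"
        hence "lam i \<noteq> lam j" using inj j by (auto dest: inj_onD)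
        moreover have "f i \<in> E (lam i)" using f i by auto
        ultimately show "ip (f i) e = 0" using eig_orth[OF _ eE] by blast
      qed
      finally show ?thesis by simp
    qed
    have "f j = (\<Sum>e\<in>Obx (lam j). ip (f j) e *\<^sub>R e)" by (rule onb_expand[OF onb_E bip]) (use f j in auto)
    also have "\<dots> = c j" unfolding c_def using co by simp
    finally show ?thesis .
  qed
  have "(THE Z. \<exists>f. (\<forall>i\<in>{1..r}. f i \<in> E (lam i)) \<and> Y = (\<Sum>i=1..r. f i) \<and> Z = f j) = c j"
  proof (rule the_equality)
    show "\<exists>f. (\<forall>i\<in>{1..r}. f i \<in> E (lam i)) \<and> Y = (\<Sum>i=1..r. f i) \<and> c j = f j"
      using cE sumc by blast
    fix Z assume "\<exists>f. (\<forall>i\<in>{1..r}. f i \<in> E (lam i)) \<and> Y = (\<Sum>i=1..r. f i) \<and> Z = f j"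
    thus "Z = c j" using uniq by blast
  qed
  thus ?thesis unfolding dcomp_def using cE by simp
qed

end


theorem proposition3p3:
  fixes brk :: "'g::euclidean_space \<Rightarrow> 'g \<Rightarrow> 'g"
    and h m :: "'g set" and ip A :: "'g \<Rightarrow> 'g \<Rightarrow> real"
    and r :: nat and lam :: "nat \<Rightarrow> real"
  assumes red: "reductive_decomp brk h m"
    and ip: "inv_inner brk h m ip"
    and Ainv: "inv_sym_form brk h m A"
    and cod: "codazzi brk h m ip A"
    and lam_mono: "strict_mono_on {1..r} lam"
    and eigvals: "{l. eigsp m ip A l \<noteq> {0}} = lam ` {1..r}"
  shows "(\<forall>j\<in>{1, r} \<inter> {1..r}. \<forall>Y\<in>m.
            Ricd brk h m ip m (dcomp (\<lambda>i. eigsp m ip A (lam i)) r j Y)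
                              (dcomp (\<lambda>i. eigsp m ip A (lam i)) r j Y)
          \<le> Ricd brk h m ip (eigsp m ip A (lam j))
                              (dcomp (\<lambda>i. eigsp m ip A (lam i)) r j Y)
                              (dcomp (\<lambda>i. eigsp m ip A (lam i)) r j Y))
       \<and> (\<Sum>i=1..r. sd brk h m ip (eigsp m ip A (lam i))) = sd brk h m ip m"
proof -
  interpret M: main brk h m ip A r lam
    by (unfold_locales) (rule red, rule ip, rule Ainv, rule cod, rule lam_mono, rule eigvals)
  obtain Ob mu where Ob: "onb ip m Ob" and eOb: "\<forall>e\<in>Ob. e \<in> eigsp m ip A (mu e)"
    using M.ex_eigbasis by blast
  interpret M2: main2 brk h m ip A r lam Ob mu
    by (unfold_locales) (use Ob eOb in auto)
  have P1: "\<forall>j\<in>{1, r} \<inter> {1..r}. \<forall>Y\<in>m.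
            Ricd brk h m ip m (dcomp (\<lambda>i. eigsp m ip A (lam i)) r j Y)
                              (dcomp (\<lambda>i. eigsp m ip A (lam i)) r j Y)
          \<le> Ricd brk h m ip (eigsp m ip A (lam j))
                              (dcomp (\<lambda>i. eigsp m ip A (lam i)) r j Y)
                              (dcomp (\<lambda>i. eigsp m ip A (lam i)) r j Y)"
  proof (intro ballI)
    fix j Y assume j: "j \<in> {1, r} \<inter> {1..r}" and Y: "Y \<in> m"
    have jr: "j \<in> {1..r}" using j by auto
    have ext: "(lam j - u) * (lam j - v) > 0"
      if u: "u \<in> mu ` Ob" and v: "v \<in> mu ` Ob" and uy: "u \<noteq> lam j" and vy: "v \<noteq> lam j" for u v
    proof -
      obtain iu where iu: "iu \<in> {1..r}" "u = lam iu" using u M2.mu_range by blast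
      obtain iv where iv: "iv \<in> {1..r}" "v = lam iv" using v M2.mu_range by blast
      have mono: "a \<in> {1..r} \<Longrightarrow> b \<in> {1..r} \<Longrightarrow> a < b \<Longrightarrow> lam a < lam b" for a b
        using lam_mono by (rule strict_mono_onD)
      show ?thesis
      proof (cases "j = 1")
        case True
        have "iu \<noteq> 1" "iv \<noteq> 1" using uy vy iu iv True by auto
        hence "1 < iu" "1 < iv" using iu iv by auto
        hence "lam 1 < u" "lam 1 < v" using mono[of 1 iu] mono[of 1 iv] iu iv jr True by auto
        thus ?thesis using True by (simp add: mult_neg_neg)
      next
        case False
        hence jr': "j = r" using j by auto
        have "iu \<noteq> r" "iv \<noteq> r" using uy vy iu iv jr' by auto
        hence "iu < r" "iv < r" using iu iv by auto
        hence "u < lam r" "v < lam r" using mono[of iu r] mono[of iv r] iu iv jr jr' by auto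
        thus ?thesis using jr' by (simp add: mult_pos_pos)
      qed
    qed
    show "Ricd brk h m ip m (dcomp (\<lambda>i. eigsp m ip A (lam i)) r j Y)
                              (dcomp (\<lambda>i. eigsp m ip A (lam i)) r j Y)
          \<le> Ricd brk h m ip (eigsp m ip A (lam j))
                              (dcomp (\<lambda>i. eigsp m ip A (lam i)) r j Y)
                              (dcomp (\<lambda>i. eigsp m ip A (lam i)) r j Y)"
      by (rule M2.part1[OF M2.dcomp_E[OF jr Y]]) (use ext in blast)
  qed
  show ?thesis using P1 M2.part2 by blast
qed

end
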